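(* For the discrete nonlinear Schrödinger system $$u_{1,0}-u_{0,1}-\frac{\alpha-\beta}{1+u_{0,0}v_{1,1}}\,u_{0,0}=0,\qquad v_{1,0}-v_{0,1}+\frac{\alpha-\beta}{1+u_{0,0}v_{1,1}}\,v_{1,1}=0,$$ the following is a symmetry: $$\frac{\partial u_{0,0}}{\partial t_1}=\frac{u_{-1,0}}{1+u_{-1,0}v_{1,0}},\qquad \frac{\partial v_{0,0}}{\partial t_1}=\frac{-v_{1,0}}{1+u_{-1,0}v_{1,0}},$$ and the following is an extended symmetry: $$\frac{\partial u_{0,0}}{\partial \tau}=\frac{n\,u_{-1,0}}{1+u_{-1,0}v_{1,0}},\qquad \frac{\partial v_{0,0}}{\partial \tau}=\frac{-n\,v_{1,0}}{1+u_{-1,0}v_{1,0}},\qquad \frac{\partial\alpha}{\partial\tau}=1.$$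
   Context: Unknowns $u,v$ on $\mathbb Z^2$, $u_{i,j}=u(n+i,m+j)$, similarly $v$; $\alpha\neq\beta$ constants. Shifts $\mathcal S:n\mapsto n+1$, $\mathcal T:m\mapsto m+1$. For a system $\boldsymbol Q(\boldsymbol u_{0,0},\boldsymbol u_{1,0},\boldsymbol u_{0,1},\boldsymbol u_{1,1};\alpha)=\boldsymbol 0$ with $\boldsymbol u=(u,v)$ and Jacobians $\mathrm Q_{(p,q)}=\partial\boldsymbol Q/\partial\boldsymbol u_{p,q}$: $\boldsymbol F(n,m,[\boldsymbol u])$ is a symmetry ($\partial_t\boldsymbol u_{0,0}=\boldsymbol F$) if $\mathrm Q_{(0,0)}\boldsymbol F+\mathrm Q_{(1,0)}\mathcal S(\boldsymbol F)+\mathrm Q_{(0,1)}\mathcal T(\boldsymbol F)+\mathrm Q_{(1,1)}\mathcal S\mathcal T(\boldsymbol F)=\boldsymbol 0$ on all solutions; $(\boldsymbol M,\xi)$ is an extended symmetry ($\partial_\tau\boldsymbol u_{0,0}=\boldsymbol M$, $\partial_\tau\alpha=\xi$) if $\mathrm Q_{(0,0)}\boldsymbol M+\mathrm Q_{(1,0)}\mathcal S(\boldsymbol M)+\mathrm Q_{(0,1)}\mathcal T(\boldsymbol M)+\mathrm Q_{(1,1)}\mathcal S\mathcal T(\boldsymbol M)+\xi\,\partial_\alpha\boldsymbol Q=\boldsymbol 0$ on all solutions. Here $\mathcal S^p\mathcal T^q(\boldsymbol F)$ is $\boldsymbol F$ with $n\to n+p$, $m\to m+q$ and all shifts of $\boldsymbol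 u$ shifted accordingly. *)

theory Defs
  imports "HOL-Analysis.Analysis"
begin

text \<open>Lattice fields: U, V :: int \<times> int \<Rightarrow> real, with U (n,m) = u(n,m).
  At lattice point (n,m), u_{i,j} = U (n+i, m+j).\<close>

definition Q1 :: "real \<Rightarrow> real \<Rightarrow> (int \<times> int \<Rightarrow> real) \<Rightarrow> (int \<times> int \<Rightarrow> real) \<Rightarrow> int \<Rightarrow> int \<Rightarrow> real" where
  "Q1 \<alpha> \<beta> U V n m = U (n+1, m) - U (n, m+1)
      - (\<alpha> - \<beta>) / (1 + U (n, m) * V (n+1, m+1)) * U (n, m)"

definition Q2 :: "real \<Rightarrow> real \<Rightarrow> (int \<times> int \<Rightarrow> real) \<Rightarrow> (int \<times> int \<Rightarrow> real) \<Rightarrow> int \<Rightarrow> int \<Rightarrow> real" where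
  "Q2 \<alpha> \<beta> U V n m = V (n+1, m) - V (n, m+1)
      + (\<alpha> - \<beta>) / (1 + U (n, m) * V (n+1, m+1)) * V (n+1, m+1)"

definition Qc :: "nat \<Rightarrow> real \<Rightarrow> real \<Rightarrow> (int \<times> int \<Rightarrow> real) \<Rightarrow> (int \<times> int \<Rightarrow> real) \<Rightarrow> int \<Rightarrow> int \<Rightarrow> real" where
  "Qc i = (if i = 0 then Q1 else Q2)"

definition is_solution :: "real \<Rightarrow> real \<Rightarrow> (int \<times> int \<Rightarrow> real) \<Rightarrow> (int \<times> int \<Rightarrow> real) \<Rightarrow> bool" where
  "is_solution \<alpha> \<beta> U V \<longleftrightarrow>
     (\<forall>n m. 1 + U (n, m) * V (n+1, m+1) \<noteq> 0 \<and> Q1 \<alpha> \<beta> U V n m = 0 \<and> Q2 \<alpha> \<beta> U V n m = 0)"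

definition dQ_du :: "nat \<Rightarrow> real \<Rightarrow> real \<Rightarrow> (int \<times> int \<Rightarrow> real) \<Rightarrow> (int \<times> int \<Rightarrow> real) \<Rightarrow> int \<Rightarrow> int \<Rightarrow> int \<Rightarrow> int \<Rightarrow> real" where
  "dQ_du i \<alpha> \<beta> U V n m p q =
     deriv (\<lambda>x. Qc i \<alpha> \<beta> (U((n+p, m+q) := x)) V n m) (U (n+p, m+q))"

definition dQ_dv :: "nat \<Rightarrow> real \<Rightarrow> real \<Rightarrow> (int \<times> int \<Rightarrow> real) \<Rightarrow> (int \<times> int \<Rightarrow> real) \<Rightarrow> int \<Rightarrow> int \<Rightarrow> int \<Rightarrow> int \<Rightarrow> real" where
  "dQ_dv i \<alpha> \<beta> U V n m p q =
     deriv (\<lambda>x. Qc i \<alpha> \<beta> U (V((n+p, m+q) := x)) n m) (V (n+p, m+q))"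

definition dQ_dalpha :: "nat \<Rightarrow> real \<Rightarrow> real \<Rightarrow> (int \<times> int \<Rightarrow> real) \<Rightarrow> (int \<times> int \<Rightarrow> real) \<Rightarrow> int \<Rightarrow> int \<Rightarrow> real" where
  "dQ_dalpha i \<alpha> \<beta> U V n m = deriv (\<lambda>a. Qc i a \<beta> U V n m) \<alpha>"

text \<open>i-th component of  Q_(0,0) F + Q_(1,0) S(F) + Q_(0,1) T(F) + Q_(1,1) ST(F)  at (n,m),
  where the flow F = (Fu, Fv) is given as its value at every lattice point
  (so S^p T^q (F) at (n,m) is the value at (n+p, m+q)).\<close>
definition linQ :: "nat \<Rightarrow> real \<Rightarrow> real \<Rightarrow> (int \<times> int \<Rightarrow> real) \<Rightarrow> (int \<times> int \<Rightarrow> real)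
     \<Rightarrow> (int \<times> int \<Rightarrow> real) \<Rightarrow> (int \<times> int \<Rightarrow> real) \<Rightarrow> int \<Rightarrow> int \<Rightarrow> real" where
  "linQ i \<alpha> \<beta> U V Fu Fv n m =
     (\<Sum>(p,q)\<in>{(0,0),(1,0),(0,1),(1,1)}.
        dQ_du i \<alpha> \<beta> U V n m p q * Fu (n+p, m+q) + dQ_dv i \<alpha> \<beta> U V n m p q * Fv (n+p, m+q))"

definition symF_u :: "(int \<times> int \<Rightarrow> real) \<Rightarrow> (int \<times> int \<Rightarrow> real) \<Rightarrow> int \<times> int \<Rightarrow> real" where
  "symF_u U V = (\<lambda>(k,l). U (k-1, l) / (1 + U (k-1, l) * V (k+1, l)))"

definition symF_v :: "(int \<times> int \<Rightarrow> real) \<Rightarrow> (int \<times> int \<Rightarrow> real) \<Rightarrow> int \<times> int \<Rightarrow> real" where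
  "symF_v U V = (\<lambda>(k,l). - V (k+1, l) / (1 + U (k-1, l) * V (k+1, l)))"

definition extM_u :: "(int \<times> int \<Rightarrow> real) \<Rightarrow> (int \<times> int \<Rightarrow> real) \<Rightarrow> int \<times> int \<Rightarrow> real" where
  "extM_u U V = (\<lambda>(k,l). of_int k * U (k-1, l) / (1 + U (k-1, l) * V (k+1, l)))"

definition extM_v :: "(int \<times> int \<Rightarrow> real) \<Rightarrow> (int \<times> int \<Rightarrow> real) \<Rightarrow> int \<times> int \<Rightarrow> real" where
  "extM_v U V = (\<lambda>(k,l). - of_int k * V (k+1, l) / (1 + U (k-1, l) * V (k+1, l)))"

end

theory Submission
  imports Defs
begin

lemma alg:
  fixes c k um u0 u01 um1 u10 w01 w10 w11 w20 w21 D P Q R S :: real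
  assumes p1: "(u10 - u01)*D = c*u0" and p2: "(w10 - w01)*D = -c*w11"
  and p3: "(u0 - um1)*(1+um*w01) = c*um" and p4: "(w20 - w11)*(1+u10*w21) = -c*w21"
  and dD: "D = 1+u0*w11" and dP: "P = 1+um*w10" and dQ: "Q = 1+u0*w20" and dR: "R = 1+um1*w11" and dS: "S = 1+u01*w21"
  and nD: "D \<noteq> 0" and n3: "1+um*w01 \<noteq> 0" and n4: "1+u10*w21 \<noteq> 0"
  and nP: "P \<noteq> 0" and nQ: "Q \<noteq> 0" and nR: "R \<noteq> 0" and nS: "S \<noteq> 0"
  shows "-c/D^2 * (um/P) + u0/Q - um1/R + c*u0^2/D^2 * (-w21/S) = 0"
    and "-c*w11^2/D^2 * (um/P) - w20/Q + w11/R - c/D^2 * (w21/S) = 0"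
    and "-c/D^2 * (k*um/P) + (k+1)*u0/Q - k*um1/R - c*u0^2/D^2 * ((k+1)*w21/S) - u0/D = 0"
    and "-c*w11^2/D^2 * (k*um/P) - (k+1)*w20/Q + k*w11/R - c/D^2 * ((k+1)*w21/S) + w11/D = 0"
proof -
  note h = p1 p2 p3 p4 dD dP dQ dR dS n3 n4 nD
  note nz = nD nP nQ nR nS
  have "-c*um*Q*R*S + u0*D^2*P*R*S - um1*D^2*P*Q*S - c*u0^2*w21*P*Q*R = 0"
    using h by algebra
  moreover have "-c/D^2 * (um/P) + u0/Q - um1/R + c*u0^2/D^2 * (-w21/S) =
     (-c*um*Q*R*S + u0*D^2*P*R*S - um1*D^2*P*Q*S - c*u0^2*w21*P*Q*R)/(D^2*P*Q*R*S)"
    using nz by (simp add: field_simps)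
  ultimately show "-c/D^2 * (um/P) + u0/Q - um1/R + c*u0^2/D^2 * (-w21/S) = 0" by simp
  have "-c*w11^2*um*Q*R*S - w20*D^2*P*R*S + w11*D^2*P*Q*S - c*w21*P*Q*R = 0"
    using h by algebra
  moreover have "-c*w11^2/D^2 * (um/P) - w20/Q + w11/R - c/D^2 * (w21/S) =
     (-c*w11^2*um*Q*R*S - w20*D^2*P*R*S + w11*D^2*P*Q*S - c*w21*P*Q*R)/(D^2*P*Q*R*S)"
    using nz by (simp add: field_simps)
  ultimately show "-c*w11^2/D^2 * (um/P) - w20/Q + w11/R - c/D^2 * (w21/S) = 0" by simp
  have "-c*k*um*Q*R*S + (k+1)*u0*D^2*P*R*S - k*um1*D^2*P*Q*S - c*u0^2*(k+1)*w21*P*Q*R - u0*D*P*Q*R*S = 0"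
    using h by algebra
  moreover have "-c/D^2 * (k*um/P) + (k+1)*u0/Q - k*um1/R - c*u0^2/D^2 * ((k+1)*w21/S) - u0/D =
     (-c*k*um*Q*R*S + (k+1)*u0*D^2*P*R*S - k*um1*D^2*P*Q*S - c*u0^2*(k+1)*w21*P*Q*R - u0*D*P*Q*R*S)/(D^2*P*Q*R*S)"
    using nz by (simp add: field_simps power2_eq_square)
  ultimately show "-c/D^2 * (k*um/P) + (k+1)*u0/Q - k*um1/R - c*u0^2/D^2 * ((k+1)*w21/S) - u0/D = 0" by simp
  have "-c*w11^2*k*um*Q*R*S - (k+1)*w20*D^2*P*R*S + k*w11*D^2*P*Q*S - c*(k+1)*w21*P*Q*R + w11*D*P*Q*R*S = 0"
    using h by algebra
  moreover have "-c*w11^2/D^2 * (k*um/P) - (k+1)*w20/Q + k*w11/R - c/D^2 * ((k+1)*w21/S) + w11/D =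
     (-c*w11^2*k*um*Q*R*S - (k+1)*w20*D^2*P*R*S + k*w11*D^2*P*Q*S - c*(k+1)*w21*P*Q*R + w11*D*P*Q*R*S)/(D^2*P*Q*R*S)"
    using nz by (simp add: field_simps power2_eq_square)
  ultimately show "-c*w11^2/D^2 * (k*um/P) - (k+1)*w20/Q + k*w11/R - c/D^2 * ((k+1)*w21/S) + w11/D = 0" by simp
qed

lemma alg_shape:
  fixes a b k um u0 u01 um1 u10 w01 w10 w11 w20 w21 D P Q R S x y :: real
  assumes p1: "(u10 - u01)*D = (a-b)*u0" and p2: "(w10 - w01)*D = -(a-b)*w11"
  and p3: "(u0 - um1)*(1+um*w01) = (a-b)*um" and p4: "(w20 - w11)*(1+u10*w21) = -(a-b)*w21"
  and dD: "D = 1+u0*w11" and dP: "P = 1+um*w10" and dQ: "Q = 1+u0*w20" and dR: "R = 1+um1*w11" and dS: "S = 1+u01*w21"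
  and nD: "D \<noteq> 0" and n3: "1+um*w01 \<noteq> 0" and n4: "1+u10*w21 \<noteq> 0"
  and nP: "P \<noteq> 0" and nQ: "Q \<noteq> 0" and nR: "R \<noteq> 0" and nS: "S \<noteq> 0"
  shows "-(a-b)/D^2 * (um/P) + 0 * (- w10/P) + (1 * (u0/Q) + 0 * (- w20/Q))
     + (-1 * (um1/R) + 0 * (- w11/R)) + (0 * x + (a-b)*u0^2/D^2 * (- w21/S)) = 0"
  and "-(a-b)*w11^2/D^2 * (um/P) + 0 * (- w10/P) + (0 * (u0/Q) + 1 * (- w20/Q))
     + (0 * (um1/R) + -1 * (- w11/R)) + (0 * x + (a-b)/D^2 * (- w21/S)) = 0"
  and "-(a-b)/D^2 * (k*um/P) + 0 * (- k*w10/P) + (1 * ((k+1)*u0/Q) + 0 * (- (k+1)*w20/Q))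
     + (-1 * (k*um1/R) + 0 * (- k*w11/R)) + (0 * y + (a-b)*u0^2/D^2 * (- (k+1)*w21/S))
     + 1 * (- u0/D) = 0"
  and "-(a-b)*w11^2/D^2 * (k*um/P) + 0 * (- k*w10/P) + (0 * ((k+1)*u0/Q) + 1 * (- (k+1)*w20/Q))
     + (0 * (k*um1/R) + -1 * (- k*w11/R)) + (0 * y + (a-b)/D^2 * (- (k+1)*w21/S))
     + 1 * (w11/D) = 0"
proof -
  note A = alg[OF p1 p2 p3 p4 dD dP dQ dR dS nD n3 n4 nP nQ nR nS]
  show "-(a-b)/D^2 * (um/P) + 0 * (- w10/P) + (1 * (u0/Q) + 0 * (- w20/Q))
     + (-1 * (um1/R) + 0 * (- w11/R)) + (0 * x + (a-b)*u0^2/D^2 * (- w21/S)) = 0"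
    using A(1) by (simp add: algebra_simps)
  show "-(a-b)*w11^2/D^2 * (um/P) + 0 * (- w10/P) + (0 * (u0/Q) + 1 * (- w20/Q))
     + (0 * (um1/R) + -1 * (- w11/R)) + (0 * x + (a-b)/D^2 * (- w21/S)) = 0"
    using A(2) by (simp add: algebra_simps)
  show "-(a-b)/D^2 * (k*um/P) + 0 * (- k*w10/P) + (1 * ((k+1)*u0/Q) + 0 * (- (k+1)*w20/Q))
     + (-1 * (k*um1/R) + 0 * (- k*w11/R)) + (0 * y + (a-b)*u0^2/D^2 * (- (k+1)*w21/S))
     + 1 * (- u0/D) = 0"
    using A(3)[of k] nD nP nQ nR nS by (simp add: field_simps)
  show "-(a-b)*w11^2/D^2 * (k*um/P) + 0 * (- k*w10/P) + (0 * ((k+1)*u0/Q) + 1 * (- (k+1)*w20/Q))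
     + (0 * (k*um1/R) + -1 * (- k*w11/R)) + (0 * y + (a-b)/D^2 * (- (k+1)*w21/S))
     + 1 * (w11/D) = 0"
    using A(4)[of k] nD nP nQ nR nS by (simp add: field_simps)
qed

context fixes a b :: real and U V :: "int\<times>int \<Rightarrow> real" and n m :: int
  assumes D: "1 + U (n,m) * V (n+1,m+1) \<noteq> 0"
begin
lemma du100: "dQ_du 0 a b U V n m 0 0 = -(a-b)/(1 + U (n,m) * V (n+1,m+1))^2"
  unfolding dQ_du_def Qc_def Q1_def
  apply (rule DERIV_imp_deriv)
  apply (auto intro!: derivative_eq_intros simp: D)
  using D apply (simp add: divide_simps power2_eq_square) apply algebra
  done
lemma dv111: "dQ_dv 0 a b U V n m 1 1 = (a-b)*U(n,m)^2/(1 + U (n,m) * V (n+1,m+1))^2"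
  unfolding dQ_dv_def Qc_def Q1_def
  apply (rule DERIV_imp_deriv)
  apply (auto intro!: derivative_eq_intros simp: D)
  using D apply (simp add: divide_simps power2_eq_square; algebra?)
  done
lemma du200: "dQ_du 1 a b U V n m 0 0 = -(a-b)*V(n+1,m+1)^2/(1 + U (n,m) * V (n+1,m+1))^2"
  unfolding dQ_du_def Qc_def Q2_def
  apply (rule DERIV_imp_deriv)
  apply (auto intro!: derivative_eq_intros simp: D)
  using D apply (simp add: divide_simps power2_eq_square; algebra?)
  done
lemma dv211: "dQ_dv 1 a b U V n m 1 1 = (a-b)/(1 + U (n,m) * V (n+1,m+1))^2"
  unfolding dQ_dv_def Qc_def Q2_def
  apply (rule DERIV_imp_deriv)
  apply (auto intro!: derivative_eq_intros simp: D)
  using D apply (simp add: divide_simps power2_eq_square; algebra?)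
  done
lemma da1: "dQ_dalpha 0 a b U V n m = - U(n,m)/(1 + U (n,m) * V (n+1,m+1))"
  unfolding dQ_dalpha_def Qc_def Q1_def
  apply (rule DERIV_imp_deriv)
  apply (auto intro!: derivative_eq_intros simp: D)
  done
lemma da2: "dQ_dalpha 1 a b U V n m = V (n+1,m+1)/(1 + U (n,m) * V (n+1,m+1))"
  unfolding dQ_dalpha_def Qc_def Q2_def
  apply (rule DERIV_imp_deriv)
  apply (auto intro!: derivative_eq_intros simp: D)
  done
lemma du110: "dQ_du 0 a b U V n m 1 0 = 1"
  unfolding dQ_du_def Qc_def Q1_def
  by (rule DERIV_imp_deriv) (auto intro!: derivative_eq_intros simp: D)
lemma du101: "dQ_du 0 a b U V n m 0 1 = -1"
  unfolding dQ_du_def Qc_def Q1_def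
  by (rule DERIV_imp_deriv) (auto intro!: derivative_eq_intros simp: D)
lemma du111: "dQ_du 0 a b U V n m 1 1 = 0"
  unfolding dQ_du_def Qc_def Q1_def
  by (rule DERIV_imp_deriv) (auto intro!: derivative_eq_intros simp: D)
lemma dv100: "dQ_dv 0 a b U V n m 0 0 = 0"
  unfolding dQ_dv_def Qc_def Q1_def
  by (rule DERIV_imp_deriv) (auto intro!: derivative_eq_intros simp: D)
lemma dv110: "dQ_dv 0 a b U V n m 1 0 = 0"
  unfolding dQ_dv_def Qc_def Q1_def
  by (rule DERIV_imp_deriv) (auto intro!: derivative_eq_intros simp: D)
lemma dv101: "dQ_dv 0 a b U V n m 0 1 = 0"
  unfolding dQ_dv_def Qc_def Q1_def
  by (rule DERIV_imp_deriv) (auto intro!: derivative_eq_intros simp: D)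
lemma du210: "dQ_du 1 a b U V n m 1 0 = 0"
  unfolding dQ_du_def Qc_def Q2_def
  by (rule DERIV_imp_deriv) (auto intro!: derivative_eq_intros simp: D)
lemma du201: "dQ_du 1 a b U V n m 0 1 = 0"
  unfolding dQ_du_def Qc_def Q2_def
  by (rule DERIV_imp_deriv) (auto intro!: derivative_eq_intros simp: D)
lemma du211: "dQ_du 1 a b U V n m 1 1 = 0"
  unfolding dQ_du_def Qc_def Q2_def
  by (rule DERIV_imp_deriv) (auto intro!: derivative_eq_intros simp: D)
lemma dv200: "dQ_dv 1 a b U V n m 0 0 = 0"
  unfolding dQ_dv_def Qc_def Q2_def
  by (rule DERIV_imp_deriv) (auto intro!: derivative_eq_intros simp: D)
lemma dv210: "dQ_dv 1 a b U V n m 1 0 = 1"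
  unfolding dQ_dv_def Qc_def Q2_def
  by (rule DERIV_imp_deriv) (auto intro!: derivative_eq_intros simp: D)
lemma dv201: "dQ_dv 1 a b U V n m 0 1 = -1"
  unfolding dQ_dv_def Qc_def Q2_def
  by (rule DERIV_imp_deriv) (auto intro!: derivative_eq_intros simp: D)
end

lemma linQ_expand:
  "linQ i a b U V F G n m =
     dQ_du i a b U V n m 0 0 * F (n,m) + dQ_dv i a b U V n m 0 0 * G (n,m)
   + (dQ_du i a b U V n m 1 0 * F (n+1,m) + dQ_dv i a b U V n m 1 0 * G (n+1,m))
   + (dQ_du i a b U V n m 0 1 * F (n,m+1) + dQ_dv i a b U V n m 0 1 * G (n,m+1))
   + (dQ_du i a b U V n m 1 1 * F (n+1,m+1) + dQ_dv i a b U V n m 1 1 * G (n+1,m+1))"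
  unfolding linQ_def by (simp add: add.assoc)

theorem mainTheorem6:
  fixes \<alpha> \<beta> :: real
  assumes "\<alpha> \<noteq> \<beta>"
  shows "\<forall>U V. is_solution \<alpha> \<beta> U V
           \<longrightarrow> (\<forall>k l. 1 + U (k-1, l) * V (k+1, l) \<noteq> 0)
           \<longrightarrow> (\<forall>n m. \<forall>i\<in>{0,1}.
                  linQ i \<alpha> \<beta> U V (symF_u U V) (symF_v U V) n m = 0
                \<and> linQ i \<alpha> \<beta> U V (extM_u U V) (extM_v U V) n m
                    + 1 * dQ_dalpha i \<alpha> \<beta> U V n m = 0)"
proof (intro allI impI ballI)
  fix U V n m and i :: nat
  assume sol: "is_solution \<alpha> \<beta> U V" and hyp: "\<forall>k l. 1 + U (k-1, l) * V (k+1, l) \<noteq> 0"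
    and i: "i \<in> {0,1}"
  have s: "1 + U (a, b') * V (a+1, b'+1) \<noteq> 0 \<and> Q1 \<alpha> \<beta> U V a b' = 0 \<and> Q2 \<alpha> \<beta> U V a b' = 0" for a b'
    using sol unfolding is_solution_def by blast
  have nD: "1 + U (n,m) * V (n+1,m+1) \<noteq> 0" using s by blast
  have n3: "1 + U (n-1,m) * V (n,m+1) \<noteq> 0" using s[of "n-1" m] by simp
  have n4: "1 + U (n+1,m) * V (n+2,m+1) \<noteq> 0" using s[of "n+1" m] by (simp add: add.assoc)
  have nP: "1 + U (n-1,m) * V (n+1,m) \<noteq> 0" using hyp by blast
  have nQ: "1 + U (n,m) * V (n+2,m) \<noteq> 0" using hyp[rule_format, of "n+1" m] by (simp add: add.assoc)
  have nR: "1 + U (n-1,m+1) * V (n+1,m+1) \<noteq> 0" using hyp by blast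
  have nS: "1 + U (n,m+1) * V (n+2,m+1) \<noteq> 0" using hyp[rule_format, of "n+1" "m+1"] by (simp add: add.assoc)
  have e1: "U (n+1,m) - U (n,m+1) - (\<alpha> - \<beta>)/(1 + U (n,m) * V (n+1,m+1)) * U (n,m) = 0"
    using s[of n m] unfolding Q1_def by simp
  have e2: "V (n+1,m) - V (n,m+1) + (\<alpha> - \<beta>)/(1 + U (n,m) * V (n+1,m+1)) * V (n+1,m+1) = 0"
    using s[of n m] unfolding Q2_def by simp
  have e3: "U (n,m) - U (n-1,m+1) - (\<alpha> - \<beta>)/(1 + U (n-1,m) * V (n,m+1)) * U (n-1,m) = 0"
    using s[of "n-1" m] unfolding Q1_def by simp
  have e4: "V (n+2,m) - V (n+1,m+1) + (\<alpha> - \<beta>)/(1 + U (n+1,m) * V (n+2,m+1)) * V (n+2,m+1) = 0"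
    using s[of "n+1" m] unfolding Q2_def by (simp add: add.assoc)
  have p1: "(U (n+1,m) - U (n,m+1)) * (1 + U (n,m) * V (n+1,m+1)) = (\<alpha> - \<beta>) * U (n,m)"
    using e1 nD by (simp add: field_simps)
  have p2: "(V (n+1,m) - V (n,m+1)) * (1 + U (n,m) * V (n+1,m+1)) = - (\<alpha> - \<beta>) * V (n+1,m+1)"
    using e2 nD by (simp add: field_simps)
  have p3: "(U (n,m) - U (n-1,m+1)) * (1 + U (n-1,m) * V (n,m+1)) = (\<alpha> - \<beta>) * U (n-1,m)"
    using e3 n3 by (simp add: field_simps)
  have p4: "(V (n+2,m) - V (n+1,m+1)) * (1 + U (n+1,m) * V (n+2,m+1)) = - (\<alpha> - \<beta>) * V (n+2,m+1)"
    using e4 n4 by (simp add: field_simps)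
  note A = alg_shape[OF p1 p2 p3 p4 refl refl refl refl refl nD n3 n4 nP nQ nR nS]
  have Fu: "symF_u U V (n,m) = U (n-1,m) / (1 + U (n-1,m) * V (n+1,m))"
     "symF_u U V (n+1,m) = U (n,m) / (1 + U (n,m) * V (n+2,m))"
     "symF_u U V (n,m+1) = U (n-1,m+1) / (1 + U (n-1,m+1) * V (n+1,m+1))"
     "symF_v U V (n+1,m+1) = - V (n+2,m+1) / (1 + U (n,m+1) * V (n+2,m+1))"
    unfolding symF_u_def symF_v_def by (simp_all add: add.assoc)
  have Mu: "extM_u U V (n,m) = of_int n * U (n-1,m) / (1 + U (n-1,m) * V (n+1,m))"
     "extM_u U V (n+1,m) = (of_int n + 1) * U (n,m) / (1 + U (n,m) * V (n+2,m))"
     "extM_u U V (n,m+1) = of_int n * U (n-1,m+1) / (1 + U (n-1,m+1) * V (n+1,m+1))"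
     "extM_v U V (n+1,m+1) = - (of_int n + 1) * V (n+2,m+1) / (1 + U (n,m+1) * V (n+2,m+1))"
    unfolding extM_u_def extM_v_def by (simp_all add: add.assoc field_simps) (simp add: minus_divide_left algebra_simps)
  have Fv: "symF_v U V (n,m) = - V (n+1,m) / (1 + U (n-1,m) * V (n+1,m))"
     "symF_v U V (n+1,m) = - V (n+2,m) / (1 + U (n,m) * V (n+2,m))"
     "symF_v U V (n,m+1) = - V (n+1,m+1) / (1 + U (n-1,m+1) * V (n+1,m+1))"
    unfolding symF_v_def by (simp_all add: add.assoc)
  have Mv: "extM_v U V (n,m) = - of_int n * V (n+1,m) / (1 + U (n-1,m) * V (n+1,m))"
     "extM_v U V (n+1,m) = - (of_int n + 1) * V (n+2,m) / (1 + U (n,m) * V (n+2,m))"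
     "extM_v U V (n,m+1) = - of_int n * V (n+1,m+1) / (1 + U (n-1,m+1) * V (n+1,m+1))"
    unfolding extM_v_def by (simp_all add: add.assoc field_simps) (simp add: minus_divide_left algebra_simps)
  note dd = du100[where a=\<alpha> and b=\<beta> and U=U and V=V and n=n and m=m, OF nD] dv111[where a=\<alpha> and b=\<beta> and U=U and V=V and n=n and m=m, OF nD] du200[where a=\<alpha> and b=\<beta> and U=U and V=V and n=n and m=m, OF nD] dv211[where a=\<alpha> and b=\<beta> and U=U and V=V and n=n and m=m, OF nD] da1[where a=\<alpha> and b=\<beta> and U=U and V=V and n=n and m=m, OF nD] da2[where a=\<alpha> and b=\<beta> and U=U and V=V and n=n and m=m, OF nD]
    du110[where a=\<alpha> and b=\<beta> and U=U and V=V and n=n and m=m, OF nD] du101[where a=\<alpha> and b=\<beta> and U=U and V=V and n=n and m=m, OF nD] du111[where a=\<alpha> and b=\<beta> and U=U and V=V and n=n and m=m, OF nD] dv100[where a=\<alpha> and b=\<beta> and U=U and V=V and n=n and m=m, OF nD] dv110[where a=\<alpha> and b=\<beta> and U=U and V=V and n=n and m=m, OF nD] dv101[where a=\<alpha> and b=\<beta> and U=U and V=V and n=n and m=m, OF nD]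
    du210[where a=\<alpha> and b=\<beta> and U=U and V=V and n=n and m=m, OF nD] du201[where a=\<alpha> and b=\<beta> and U=U and V=V and n=n and m=m, OF nD] du211[where a=\<alpha> and b=\<beta> and U=U and V=V and n=n and m=m, OF nD] dv200[where a=\<alpha> and b=\<beta> and U=U and V=V and n=n and m=m, OF nD] dv210[where a=\<alpha> and b=\<beta> and U=U and V=V and n=n and m=m, OF nD] dv201[where a=\<alpha> and b=\<beta> and U=U and V=V and n=n and m=m, OF nD]
  from i consider "i = 0" | "i = 1" by blast
  then show "linQ i \<alpha> \<beta> U V (symF_u U V) (symF_v U V) n m = 0
                \<and> linQ i \<alpha> \<beta> U V (extM_u U V) (extM_v U V) n m
                    + 1 * dQ_dalpha i \<alpha> \<beta> U V n m = 0"
  proof cases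
    case 1
    show ?thesis unfolding 1 linQ_expand dd Fu Fv Mu Mv by (intro conjI A(1) A(3))
  next
    case 2
    show ?thesis unfolding 2 linQ_expand dd Fu Fv Mu Mv by (intro conjI A(2) A(4))
  qed
qed

end
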